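(* Let $R$ be a valuation domain of cardinality $\aleph_1$ with quotient field $Q$, where $Q$ is not countably generated as an $R$-module. If the type $Q/R$ is essentially countable, then it is strongly countable.
   Context: A valuation domain is an integral domain whose ideals are linearly ordered by inclusion. For an $R$-submodule $J$ of $Q$ with $R\subseteq J$, not countably generated, write $J=\bigcup_{\sigma<\omega_1} r_\sigma^{-1}R$ with nonzero $r_\sigma\in R$ such that for $\tau<\sigma$, $r_\tau\mid r_\sigma$ and $r_\sigma\nmid r_\tau$. The type $J/R$ is essentially uncountable if for every $\sigma<\omega_1$ there is $\tau>\sigma$ with $r_\sigma R/r_\tau R$ uncountable; otherwise it is essentially countable (equivalently, there is $\gamma<\omega_1$ with $r_\gamma R/r_\sigma R$ countable for all $\gamma<\sigma<\omega_1$). It is strongly countable if $R/r_\sigma R$ is countable for all $\sigma<\omega_1$. These notions are independent of the choice of the $r_\sigma$. *)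

theory Defs
  imports Main "HOL-Computational_Algebra.Fraction_Field" "HOL-Library.Countable_Set"
begin

definition is_ideal :: "'a::comm_ring_1 set \<Rightarrow> bool" where
  "is_ideal I \<longleftrightarrow> 0 \<in> I \<and> (\<forall>x\<in>I. \<forall>y\<in>I. x + y \<in> I) \<and> (\<forall>r x. x \<in> I \<longrightarrow> r * x \<in> I)"

definition valuation_domain :: "'a::idom itself \<Rightarrow> bool" where
  "valuation_domain _ \<longleftrightarrow>
     (\<forall>I J :: 'a set. is_ideal I \<and> is_ideal J \<longrightarrow> I \<subseteq> J \<or> J \<subseteq> I)"

definition emb :: "'a::idom \<Rightarrow> 'a fract" where
  "emb a = Fraction_Field.Fract a 1"

definition R_span :: "'a::idom fract set \<Rightarrow> 'a fract set" where
  "R_span S = {q. \<exists>F c. finite F \<and> F \<subseteq> S \<and> q = (\<Sum>s\<in>F. emb (c s) * s)}"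

definition countably_generated_Q :: "'a::idom itself \<Rightarrow> bool" where
  "countably_generated_Q _ \<longleftrightarrow> (\<exists>S :: 'a fract set. countable S \<and> R_span S = UNIV)"

abbreviation omega1 :: "nat set rel" where
  "omega1 \<equiv> cardSuc natLeq"

abbreviation ord_less :: "nat set \<Rightarrow> nat set \<Rightarrow> bool" where
  "ord_less \<tau> \<sigma> \<equiv> (\<tau>, \<sigma>) \<in> omega1 \<and> \<tau> \<noteq> \<sigma>"

definition inv_R :: "'a::idom \<Rightarrow> 'a fract set" where
  "inv_R r = {Fraction_Field.Fract x r | x. True}"

definition Q_representation :: "(nat set \<Rightarrow> 'a::idom) \<Rightarrow> bool" where
  "Q_representation r \<longleftrightarrow>
     (\<forall>\<sigma>\<in>Field omega1. r \<sigma> \<noteq> 0) \<and>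
     (UNIV :: 'a fract set) = (\<Union>\<sigma>\<in>Field omega1. inv_R (r \<sigma>)) \<and>
     (\<forall>\<sigma>\<in>Field omega1. \<forall>\<tau>\<in>Field omega1. ord_less \<tau> \<sigma> \<longrightarrow>
         r \<tau> dvd r \<sigma> \<and> \<not> r \<sigma> dvd r \<tau>)"

(* The quotient module aR / bR, as the set of cosets x + bR for x in aR. *)
definition quot_mod :: "'a::idom \<Rightarrow> 'a \<Rightarrow> 'a set set" where
  "quot_mod a b = (\<lambda>x. {y. b dvd (y - x)}) ` {x. a dvd x}"

definition essentially_uncountable :: "(nat set \<Rightarrow> 'a::idom) \<Rightarrow> bool" where
  "essentially_uncountable r \<longleftrightarrow>
     (\<forall>\<sigma>\<in>Field omega1. \<exists>\<tau>\<in>Field omega1. ord_less \<sigma> \<tau> \<and>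
        uncountable (quot_mod (r \<sigma>) (r \<tau>)))"

definition essentially_countable :: "(nat set \<Rightarrow> 'a::idom) \<Rightarrow> bool" where
  "essentially_countable r \<longleftrightarrow> \<not> essentially_uncountable r"

definition strongly_countable :: "(nat set \<Rightarrow> 'a::idom) \<Rightarrow> bool" where
  "strongly_countable r \<longleftrightarrow> (\<forall>\<sigma>\<in>Field omega1. countable (quot_mod 1 (r \<sigma>)))"

end

theory Submission
  imports Defs
begin

lemma omega1_total:
  assumes "x \<in> Field omega1" "y \<in> Field omega1" "x \<noteq> y"
  shows "(x, y) \<in> omega1 \<or> (y, x) \<in> omega1"
proof -
  have "Well_order omega1" by (rule cardSuc_Well_order[OF natLeq_Card_order])
  then have "total_on (Field omega1) omega1"
    unfolding well_order_on_def linear_order_on_def by blast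
  then show ?thesis using assms unfolding total_on_def by blast
qed

lemma step1:
  fixes g t :: "'a::idom"
  assumes g0: "g \<noteq> 0" and dv: "g * g dvd t" and cq: "countable (quot_mod g t)"
  shows "countable (quot_mod 1 g)"
proof -
  define f where "f S = {y. \<exists>z\<in>S. g * g dvd (g * y - z)}" for S :: "'a set"
  have "quot_mod 1 g \<subseteq> f ` quot_mod g t"
  proof
    fix C assume "C \<in> quot_mod 1 g"
    then obtain x where C: "C = {y. g dvd (y - x)}" unfolding quot_mod_def by auto
    define S where "S = {y. t dvd (y - g * x)}"
    have S: "S \<in> quot_mod g t" unfolding quot_mod_def S_def by auto
    have "f S = C"
    proof (intro set_eqI iffI)
      fix y assume "y \<in> f S"
      then obtain z where z1: "t dvd (z - g * x)" and z2: "g * g dvd (g * y - z)"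
        unfolding f_def S_def by auto
      have "g * g dvd (z - g * x)" using z1 dv dvd_trans by blast
      then have "g * g dvd ((g * y - z) + (z - g * x))" using z2 dvd_add by blast
      then have "g * g dvd g * (y - x)" by (simp add: algebra_simps)
      then have "g dvd (y - x)" using g0 by simp
      then show "y \<in> C" using C by simp
    next
      fix y assume "y \<in> C"
      then have "g dvd (y - x)" using C by simp
      then have "g * g dvd g * (y - x)" by simp
      then have "g * g dvd (g * y - g * x)" by (simp add: algebra_simps)
      moreover have "g * x \<in> S" unfolding S_def by simp
      ultimately show "y \<in> f S" unfolding f_def by blast
    qed
    then show "C \<in> f ` quot_mod g t" using S by blast
  qed
  then show ?thesis by (rule countable_subset) (rule countable_image[OF cq])
qed

lemma unit_case:
  fixes g :: "'a::idom"
  assumes "g dvd 1"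
  shows "countable (quot_mod 1 g)"
proof -
  have all: "g dvd z" for z using assms dvd_trans one_dvd by blast
  have "quot_mod 1 g \<subseteq> {UNIV}"
    unfolding quot_mod_def using all by auto
  then show ?thesis by (rule countable_subset) simp
qed

lemma step2:
  fixes g s :: "'a::idom"
  assumes "s dvd g" "countable (quot_mod 1 g)"
  shows "countable (quot_mod 1 s)"
proof -
  define f where "f S = {y. \<exists>z\<in>S. s dvd (y - z)}" for S :: "'a set"
  have "quot_mod 1 s \<subseteq> f ` quot_mod 1 g"
  proof
    fix C assume "C \<in> quot_mod 1 s"
    then obtain x where C: "C = {y. s dvd (y - x)}" unfolding quot_mod_def by auto
    define S where "S = {y. g dvd (y - x)}"
    have S: "S \<in> quot_mod 1 g" unfolding quot_mod_def S_def by auto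
    have "f S = C"
    proof (intro set_eqI iffI)
      fix y assume "y \<in> f S"
      then obtain z where z1: "g dvd (z - x)" and z2: "s dvd (y - z)"
        unfolding f_def S_def by auto
      have "s dvd (z - x)" using z1 assms(1) dvd_trans by blast
      then have "s dvd ((y - z) + (z - x))" using z2 dvd_add by blast
      then show "y \<in> C" using C by simp
    next
      fix y assume "y \<in> C"
      moreover have "x \<in> S" unfolding S_def by simp
      ultimately show "y \<in> f S" unfolding f_def C by auto
    qed
    then show "C \<in> f ` quot_mod 1 g" using S by blast
  qed
  then show ?thesis by (rule countable_subset) (rule countable_image[OF assms(2)])
qed

lemma step3:
  fixes g s :: "'a::idom"
  assumes "countable (quot_mod 1 g)" "countable (quot_mod g s)"
  shows "countable (quot_mod 1 s)"
proof -
  define rep where "rep T = (SOME y. y \<in> T)" for T :: "'a set"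
  have "quot_mod 1 s \<subseteq> (\<Union>T\<in>quot_mod 1 g. (\<lambda>U. (\<lambda>y. y + rep T) ` U) ` quot_mod g s)"
  proof
    fix C assume "C \<in> quot_mod 1 s"
    then obtain x where C: "C = {y. s dvd (y - x)}" unfolding quot_mod_def by auto
    define T where "T = {y. g dvd (y - x)}"
    have T: "T \<in> quot_mod 1 g" unfolding quot_mod_def T_def by auto
    have "x \<in> T" unfolding T_def by simp
    then have "rep T \<in> T" unfolding rep_def by (rule someI)
    then have "g dvd (rep T - x)" unfolding T_def by simp
    then have gt: "g dvd (x - rep T)" using dvd_minus_iff[of g "rep T - x"] by simp
    define U where "U = {y. s dvd (y - (x - rep T))}"
    have U: "U \<in> quot_mod g s" unfolding quot_mod_def U_def
      by (rule image_eqI[where x="x - rep T"]) (simp_all add: gt)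
    have "(\<lambda>y. y + rep T) ` U = C"
    proof (intro set_eqI iffI)
      fix y assume "y \<in> (\<lambda>y. y + rep T) ` U"
      then obtain u where "y = u + rep T" "s dvd (u - (x - rep T))" unfolding U_def by auto
      then show "y \<in> C" unfolding C by (simp add: algebra_simps)
    next
      fix y assume "y \<in> C"
      then have "y - rep T \<in> U" unfolding U_def C by (simp add: algebra_simps)
      then show "y \<in> (\<lambda>y. y + rep T) ` U" by (rule rev_image_eqI) simp
    qed
    then show "C \<in> (\<Union>T\<in>quot_mod 1 g. (\<lambda>U. (\<lambda>y. y + rep T) ` U) ` quot_mod g s)"
      using T U by blast
  qed
  moreover have "countable (\<Union>T\<in>quot_mod 1 g. (\<lambda>U. (\<lambda>y. y + rep T) ` U) ` quot_mod g s)"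
    by (rule countable_UN[OF assms(1)]) (rule countable_image[OF assms(2)])
  ultimately show ?thesis by (rule countable_subset)
qed

lemma aux_neg: "\<not> (\<forall>x\<in>A. \<exists>y\<in>A. P x y \<and> \<not> Q x y) \<Longrightarrow> \<exists>x\<in>A. \<forall>y\<in>A. P x y \<longrightarrow> Q x y"
  by blast

theorem mainTheorem3:
  fixes r :: "nat set \<Rightarrow> 'a::idom"
  assumes "valuation_domain TYPE('a)"
    and "(card_of (UNIV :: 'a set), cardSuc natLeq) \<in> ordIso"
    and "\<not> countably_generated_Q TYPE('a)"
    and "Q_representation r"
    and "essentially_countable r"
  shows "strongly_countable r"
proof -
  have rep: "(\<forall>\<sigma>\<in>Field omega1. r \<sigma> \<noteq> 0) \<and>
     (UNIV :: 'a fract set) = (\<Union>\<sigma>\<in>Field omega1. inv_R (r \<sigma>)) \<and>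
     (\<forall>\<sigma>\<in>Field omega1. \<forall>\<tau>\<in>Field omega1. ord_less \<tau> \<sigma> \<longrightarrow>
         r \<tau> dvd r \<sigma> \<and> \<not> r \<sigma> dvd r \<tau>)"
    using assms(4) unfolding Q_representation_def .
  note nz = conjunct1[OF rep]
  note cov = conjunct1[OF conjunct2[OF rep]]
  note ord = conjunct2[OF conjunct2[OF rep]]
  have ordd: "r \<tau> dvd r \<sigma>" if S: "\<sigma> \<in> Field omega1" and T: "\<tau> \<in> Field omega1"
     and ne: "\<tau> \<noteq> \<sigma>" and nl: "\<not> ord_less \<sigma> \<tau>" for \<sigma> \<tau>
  proof -
    have ne2: "\<sigma> \<noteq> \<tau>" using ne by (rule not_sym)
    have "(\<tau>, \<sigma>) \<in> omega1"
      using omega1_total[OF S T ne2]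
    proof (elim disjE)
      assume "(\<sigma>, \<tau>) \<in> omega1"
      then have "ord_less \<sigma> \<tau>" using ne2 by (rule conjI)
      with nl show ?thesis by (rule notE)
    qed
    then have "ord_less \<tau> \<sigma>" using ne by (rule conjI)
    then have "r \<tau> dvd r \<sigma> \<and> \<not> r \<sigma> dvd r \<tau>" by (rule mp[OF bspec[OF bspec[OF ord S] T]])
    then show ?thesis by (rule conjunct1)
  qed
  obtain \<gamma> where g: "\<gamma> \<in> Field omega1"
    and gc: "\<And>\<tau>. \<tau> \<in> Field omega1 \<Longrightarrow> ord_less \<gamma> \<tau> \<Longrightarrow> countable (quot_mod (r \<gamma>) (r \<tau>))"
  proof -
    have "\<exists>x\<in>Field omega1. \<forall>y\<in>Field omega1. ord_less x y \<longrightarrow> countable (quot_mod (r x) (r y))"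
      by (rule aux_neg[OF assms(5)[unfolded essentially_countable_def essentially_uncountable_def]])
    then obtain x where "x \<in> Field omega1" "\<forall>y\<in>Field omega1. ord_less x y \<longrightarrow> countable (quot_mod (r x) (r y))"
      by (rule bexE)
    then show ?thesis using that by simp
  qed
  have g0: "r \<gamma> \<noteq> 0" by (rule bspec[OF nz g])
  define c where "c = r \<gamma> * r \<gamma>"
  have c0: "c \<noteq> 0" using g0 unfolding c_def by simp
  have "Fraction_Field.Fract 1 c \<in> (\<Union>\<sigma>\<in>Field omega1. inv_R (r \<sigma>))" by (subst cov[symmetric]) (rule UNIV_I)
  then obtain \<sigma> where s: "\<sigma> \<in> Field omega1" and sin: "Fraction_Field.Fract 1 c \<in> inv_R (r \<sigma>)"
    by (rule UN_E)
  have s0: "r \<sigma> \<noteq> 0" by (rule bspec[OF nz s])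
  have "\<exists>x. Fraction_Field.Fract 1 c = Fraction_Field.Fract x (r \<sigma>) \<and> True" using sin unfolding inv_R_def by (simp only: mem_Collect_eq)
  then obtain x where "Fraction_Field.Fract 1 c = Fraction_Field.Fract x (r \<sigma>)" by (elim exE conjE)
  then have "r \<sigma> = x * c" using eq_fract(1)[OF c0 s0] by simp
  then have cs: "c dvd r \<sigma>" using dvd_triv_right[of c x] by simp
  have cg: "countable (quot_mod 1 (r \<gamma>))"
  proof (cases "ord_less \<gamma> \<sigma>")
    case True
    have "r \<gamma> * r \<gamma> dvd r \<sigma>" using cs unfolding c_def .
    then show ?thesis by (rule step1[OF g0 _ gc[OF s True]])
  next
    case False
    have "r \<sigma> dvd r \<gamma>"
    proof (cases "\<sigma> = \<gamma>")
      case False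
      then show ?thesis by (rule ordd[OF g s _ \<open>\<not> ord_less \<gamma> \<sigma>\<close>])
    qed simp
    then have "c dvd r \<gamma>" by (rule dvd_trans[OF cs])
    then have "r \<gamma> * r \<gamma> dvd r \<gamma> * 1" by (simp add: c_def)
    then have "r \<gamma> dvd 1" using g0 by simp
    then show ?thesis by (rule unit_case)
  qed
  show ?thesis unfolding strongly_countable_def
  proof
    fix \<rho> assume p: "\<rho> \<in> Field omega1"
    show "countable (quot_mod 1 (r \<rho>))"
    proof (cases "ord_less \<gamma> \<rho>")
      case True
      then show ?thesis by (rule step3[OF cg gc[OF p]])
    next
      case False
      have "r \<rho> dvd r \<gamma>"
      proof (cases "\<rho> = \<gamma>")
        case False
        then show ?thesis by (rule ordd[OF g p _ \<open>\<not> ord_less \<gamma> \<rho>\<close>])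
      qed simp
      then show ?thesis by (rule step2[OF _ cg])
    qed
  qed
qed

end
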